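(* Let $d\ge3$ and $\mathcal D=\mathbb S_1^{d-1}$. Then for any $M\in\mathrm{SL}(d+1,\mathbb R)$, $\mathcal G_{\mathcal D}(M)\le\sigma_d+1$, where $\sigma_d$ is the kissing number of $\mathbb R^d$.
   Context: $\mathbb S_1^{d-1}$ is the unit sphere in $\mathbb R^d$. Elements of $\mathbb R^{d+1}$ are row vectors $(u,\vec v)$ with $u\in\mathbb R$, $\vec v\in\mathbb R^d$; $\mathbb Z^{d+1}M$ is the lattice $\{\vec mM:\vec m\in\mathbb Z^{d+1}\}$. For $\mathcal D\subseteq\mathbb S_1^{d-1}$ and $t\in(0,1)$, $\mathcal Q_{\mathcal D}(M,t)=\{(u,\vec v)\in\mathbb Z^{d+1}M : -t<u<1-t,\ \vec v\in\mathbb R_{>0}\mathcal D\}$, $F_{\mathcal D}(M,t)=\min\{|\vec v| : (u,\vec v)\in\mathcal Q_{\mathcal D}(M,t)\}$, and $\mathcal G_{\mathcal D}(M)=|\{F_{\mathcal D}(M,t):0<t<1\}|$. The kissing number $\sigma_d$ is the maximal number of non-overlapping unit balls in $\mathbb R^d$ touching a fixed unit ball. *)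

theory Defs
  imports "HOL-Analysis.Analysis"
begin

text \<open>R^d is modelled as the type real^'n (d = CARD('n)); R^(d+1) is
  modelled as real^('n option), where the coordinate None is the first coordinate u
  and the coordinates Some j form the vector part v.\<close>

definition first_coord :: "real^('n::finite option) \<Rightarrow> real" where
  "first_coord w = w $ None"

definition vec_part :: "real^('n::finite option) \<Rightarrow> real^'n" where
  "vec_part w = (\<chi> j. w $ Some j)"

definition lattice :: "real^('n::finite option)^('n option) \<Rightarrow> (real^('n option)) set" where
  "lattice M = {m v* M | m. \<forall>i. m $ i \<in> \<int>}"

definition pos_cone :: "(real^'n::finite) set \<Rightarrow> (real^'n) set" where
  "pos_cone D = {r *\<^sub>R x | r x. r > 0 \<and> x \<in> D}"

definition Q_set :: "(real^'n::finite) set \<Rightarrow> real^('n option)^('n option) \<Rightarrow> real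
    \<Rightarrow> (real^('n option)) set" where
  "Q_set D M t = {w \<in> lattice M. - t < first_coord w \<and> first_coord w < 1 - t
                    \<and> vec_part w \<in> pos_cone D}"

definition F_fun :: "(real^'n::finite) set \<Rightarrow> real^('n option)^('n option) \<Rightarrow> real \<Rightarrow> real" where
  "F_fun D M t = Inf (norm ` vec_part ` Q_set D M t)"

definition value_set :: "(real^'n::finite) set \<Rightarrow> real^('n option)^('n option) \<Rightarrow> real set" where
  "value_set D M = {F_fun D M t | t. 0 < t \<and> t < 1}"

text \<open>Kissing number of the space 'a: the maximal number of pairwise non-overlapping
  (open) unit balls touching the unit ball centred at 0, i.e. centres at distance 2
  from 0 and pairwise at distance at least 2.\<close>
definition kissing_number :: "'a::real_normed_vector itself \<Rightarrow> nat" where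
  "kissing_number _ = Sup {card S | S :: 'a set. finite S \<and> S \<subseteq> sphere 0 2 \<and>
        (\<forall>x\<in>S. \<forall>y\<in>S. x \<noteq> y \<longrightarrow> ball x 1 \<inter> ball y 1 = {})}"

end

theory Submission
  imports Defs
begin

lemma lattice_diff:
  assumes "a \<in> lattice M" "b \<in> lattice M" shows "a - b \<in> lattice M"
proof -
  obtain m where m: "a = m v* M" "\<forall>i. m $ i \<in> \<int>" using assms(1) unfolding lattice_def by blast
  obtain n where n: "b = n v* M" "\<forall>i. n $ i \<in> \<int>" using assms(2) unfolding lattice_def by blast
  have "a - b = (m - n) v* M" using m n by (simp add: vector_matrix_mult_diff_distrib)
  moreover have "\<forall>i. (m - n) $ i \<in> \<int>" using m n by auto
  ultimately show ?thesis unfolding lattice_def by blast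
qed

lemma lattice_zero: "0 \<in> lattice M"
proof -
  have "(0::real^_) = 0 v* M \<and> (\<forall>i. (0::real^_) $ i \<in> \<int>)" by (simp add: vector_matrix_mult_def zero_vec_def)
  thus ?thesis unfolding lattice_def by blast
qed

lemma lattice_neg: "a \<in> lattice M \<Longrightarrow> - a \<in> lattice M"
  using lattice_diff[OF lattice_zero, of a M] by simp

lemma finite_int_vecs:
  "finite {m :: real^'k::finite. (\<forall>i. m $ i \<in> \<int>) \<and> (\<forall>i. \<bar>m $ i\<bar> \<le> B)}"
proof -
  define C where "C = \<lceil>B\<rceil>"
  have fin: "finite (\<Pi>\<^sub>E i\<in>(UNIV::'k set). {-C..C})" by (intro finite_PiE) auto
  have "{m :: real^'k. (\<forall>i. m $ i \<in> \<int>) \<and> (\<forall>i. \<bar>m $ i\<bar> \<le> B)}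
        \<subseteq> (\<lambda>f. \<chi> i. real_of_int (f i)) ` (\<Pi>\<^sub>E i\<in>(UNIV::'k set). {-C..C})"
  proof
    fix m :: "real^'k" assume "m \<in> {m. (\<forall>i. m $ i \<in> \<int>) \<and> (\<forall>i. \<bar>m $ i\<bar> \<le> B)}"
    hence h: "\<And>i. m $ i \<in> \<int>" "\<And>i. \<bar>m $ i\<bar> \<le> B" by auto
    define f where "f = (\<lambda>i. \<lfloor>m $ i\<rfloor>)"
    have e: "\<And>i. real_of_int (f i) = m $ i" unfolding f_def using h(1) by simp
    have "f \<in> (\<Pi>\<^sub>E i\<in>(UNIV::'k set). {-C..C})"
    proof -
      have "\<And>i. f i \<in> {-C..C}"
      proof -
        fix i
        have "\<bar>real_of_int (f i)\<bar> \<le> B" using e h(2) by simp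
        hence "\<bar>f i\<bar> \<le> C" proof -
          have "real_of_int \<bar>f i\<bar> \<le> real_of_int C" unfolding C_def
            using \<open>\<bar>real_of_int (f i)\<bar> \<le> B\<close> le_of_int_ceiling[of B] by linarith
          thus ?thesis by linarith
        qed
        thus "f i \<in> {-C..C}" by auto
      qed
      thus ?thesis by auto
    qed
    moreover have "m = (\<chi> i. real_of_int (f i))" using e by (simp add: vec_eq_iff)
    ultimately show "m \<in> (\<lambda>f. \<chi> i. real_of_int (f i)) ` (\<Pi>\<^sub>E i\<in>(UNIV::'k set). {-C..C})" by blast
  qed
  thus ?thesis by (rule finite_subset[OF _ finite_imageI[OF fin]])
qed

lemma finite_lattice_ball:
  fixes M :: "real^('k::finite option)^('k option)"
  assumes "det M \<noteq> 0"
  shows "finite {w \<in> lattice M. norm w \<le> R}"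
proof -
  have "invertible M" using assms invertible_det_nz[of M] by simp
  then obtain N where N: "M ** N = mat 1" unfolding invertible_def by blast
  define B where "B = (\<Sum>i\<in>UNIV. \<Sum>j\<in>UNIV. \<bar>N $ j $ i\<bar>) * R"
  have sub: "{w \<in> lattice M. norm w \<le> R} \<subseteq> (\<lambda>m. m v* M) ` {m :: real^('k option). (\<forall>i. m $ i \<in> \<int>) \<and> (\<forall>i. \<bar>m $ i\<bar> \<le> B)}"
  proof
    fix w assume w: "w \<in> {w \<in> lattice M. norm w \<le> R}"
    hence wl: "w \<in> lattice M" and wR: "norm w \<le> R" by simp_all
    from wl obtain m where m: "w = m v* M" "\<forall>i. m $ i \<in> \<int>" unfolding lattice_def by blast
    have R0: "0 \<le> R" using wR norm_ge_zero[of w] by linarith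
    have "w v* N = m v* (M ** N)" unfolding m(1) by (rule vector_matrix_mul_assoc)
    hence mw: "m = w v* N" using N by simp
    have "\<bar>m $ i\<bar> \<le> B" for i
    proof -
      have "\<bar>m $ i\<bar> = \<bar>\<Sum>j\<in>UNIV. N $ j $ i * w $ j\<bar>" using mw by (simp add: vector_matrix_mult_def mult.commute)
      also have "\<dots> \<le> (\<Sum>j\<in>UNIV. \<bar>N $ j $ i\<bar> * \<bar>w $ j\<bar>)" by (rule order_trans[OF sum_abs]) (simp add: abs_mult)
      also have "\<dots> \<le> (\<Sum>j\<in>UNIV. \<bar>N $ j $ i\<bar> * R)"
      proof (rule sum_mono)
        fix j
        have "\<bar>w $ j\<bar> \<le> R" using component_le_norm_cart[of w j] wR by linarith
        thus "\<bar>N $ j $ i\<bar> * \<bar>w $ j\<bar> \<le> \<bar>N $ j $ i\<bar> * R" by (rule mult_left_mono) simp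
      qed
      also have "\<dots> \<le> (\<Sum>i\<in>UNIV. \<Sum>j\<in>UNIV. \<bar>N $ j $ i\<bar> * R)"
        by (rule member_le_sum[of i UNIV "\<lambda>i. \<Sum>j\<in>UNIV. \<bar>N $ j $ i\<bar> * R"])
           (use R0 in \<open>simp_all add: sum_nonneg\<close>)
      also have "\<dots> = B" unfolding B_def by (simp add: sum_distrib_right)
      finally show ?thesis .
    qed
    thus "w \<in> (\<lambda>m. m v* M) ` {m. (\<forall>i. m $ i \<in> \<int>) \<and> (\<forall>i. \<bar>m $ i\<bar> \<le> B)}"
      using m by (intro image_eqI[of _ _ m]) simp_all
  qed
  show ?thesis by (rule finite_subset[OF sub finite_imageI[OF finite_int_vecs]])
qed

definition NN :: "real^('n::finite option)^('n option) \<Rightarrow> real \<Rightarrow> real set" where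
  "NN M s = {norm (vec_part w) | w. w \<in> lattice M \<and> 0 \<le> first_coord w \<and> first_coord w < s \<and> vec_part w \<noteq> 0}"

lemma vec_part_diff: "vec_part (a - b) = vec_part a - vec_part b"
  by (simp add: vec_part_def vec_eq_iff)
lemma vec_part_neg: "vec_part (- a) = - vec_part a"
  by (simp add: vec_part_def vec_eq_iff)
lemma first_coord_diff: "first_coord (a - b) = first_coord a - first_coord b"
  by (simp add: first_coord_def)
lemma first_coord_neg: "first_coord (- a) = - first_coord a"
  by (simp add: first_coord_def)

lemma pos_cone_sphere: "pos_cone (sphere (0::real^'n::finite) 1) = {v. v \<noteq> 0}"
proof (intro set_eqI iffI)
  fix v assume "v \<in> pos_cone (sphere (0::real^'n) 1)"
  then obtain r x where "v = r *\<^sub>R x" "r > 0" "x \<in> sphere 0 1" unfolding pos_cone_def by blast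
  thus "v \<in> {v. v \<noteq> 0}" by auto
next
  fix v :: "real^'n" assume "v \<in> {v. v \<noteq> 0}"
  hence "v = norm v *\<^sub>R ((1 / norm v) *\<^sub>R v) \<and> norm v > 0 \<and> (1 / norm v) *\<^sub>R v \<in> sphere 0 1" by auto
  thus "v \<in> pos_cone (sphere 0 1)" unfolding pos_cone_def by blast
qed

lemma F_eq:
  assumes "0 < t" "t < 1"
  shows "norm ` vec_part ` Q_set (sphere (0::real^'n::finite) 1) M t = NN M (max t (1 - t))"
proof (intro set_eqI iffI)
  fix x assume "x \<in> norm ` vec_part ` Q_set (sphere (0::real^'n) 1) M t"
  then obtain w where w: "w \<in> lattice M" "- t < first_coord w" "first_coord w < 1 - t" "vec_part w \<noteq> 0"
    "x = norm (vec_part w)" unfolding Q_set_def pos_cone_sphere by auto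
  show "x \<in> NN M (max t (1 - t))"
  proof (cases "0 \<le> first_coord w")
    case True thus ?thesis using w unfolding NN_def by force
  next
    case False
    have "- w \<in> lattice M" using w lattice_neg by blast
    moreover have "x = norm (vec_part (- w))" using w by (simp add: vec_part_neg)
    ultimately show ?thesis using w False unfolding NN_def
      by (intro CollectI exI[of _ "- w"]) (auto simp: vec_part_neg first_coord_neg)
  qed
next
  fix x assume "x \<in> NN M (max t (1 - t))"
  then obtain w where w: "w \<in> lattice M" "0 \<le> first_coord w" "first_coord w < max t (1 - t)" "vec_part w \<noteq> 0"
    "x = norm (vec_part w)" unfolding NN_def by auto
  show "x \<in> norm ` vec_part ` Q_set (sphere (0::real^'n) 1) M t"
  proof (cases "first_coord w < 1 - t")
    case True
    hence "w \<in> Q_set (sphere (0::real^'n) 1) M t" using w assms unfolding Q_set_def pos_cone_sphere by auto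
    thus ?thesis using w by blast
  next
    case False
    have "- w \<in> Q_set (sphere (0::real^'n) 1) M t" using w assms False lattice_neg
      unfolding Q_set_def pos_cone_sphere by (auto simp: vec_part_neg first_coord_neg)
    moreover have "x = norm (vec_part (- w))" using w by (simp add: vec_part_neg)
    ultimately show ?thesis by blast
  qed
qed

lemma norm_split: "norm w \<le> \<bar>first_coord w\<bar> + norm (vec_part (w :: real^('n::finite option)))"
proof -
  have "(norm w)^2 = (\<Sum>i\<in>UNIV. w $ i * w $ i)" by (simp add: power2_norm_eq_inner inner_vec_def)
  also have "\<dots> = w $ None * w $ None + (\<Sum>i\<in>range Some. w $ i * w $ i)"
    by (simp add: UNIV_option_conv sum.insert)
  also have "(\<Sum>i\<in>range Some. w $ i * w $ i) = (\<Sum>j\<in>UNIV. w $ Some j * w $ Some j)"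
    by (simp add: sum.reindex)
  also have "\<dots> = (norm (vec_part w))^2" by (simp add: power2_norm_eq_inner inner_vec_def vec_part_def)
  finally have "(norm w)^2 = (first_coord w)^2 + (norm (vec_part w))^2"
    by (simp add: first_coord_def power2_eq_square)
  also have "\<dots> \<le> (\<bar>first_coord w\<bar> + norm (vec_part w))^2"
    by (simp add: power2_eq_square algebra_simps)
  finally show ?thesis by (rule power2_le_imp_le) simp
qed

lemma attain:
  assumes "det M \<noteq> 0" "NN M s \<noteq> {}" "s \<le> 1"
  shows "\<exists>w. w \<in> lattice M \<and> 0 \<le> first_coord w \<and> first_coord w < s \<and> vec_part w \<noteq> 0
           \<and> norm (vec_part w) = Inf (NN M s) \<and> (\<forall>x\<in>NN M s. Inf (NN M s) \<le> x)"
proof -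
  obtain x0 where x0: "x0 \<in> NN M s" using assms(2) by blast
  define A where "A = NN M s \<inter> {..x0}"
  have "A \<subseteq> (\<lambda>w. norm (vec_part w)) ` {w \<in> lattice M. norm w \<le> 1 + x0}"
  proof
    fix x assume "x \<in> A"
    then obtain w where w: "w \<in> lattice M" "0 \<le> first_coord w" "first_coord w < s" "x = norm (vec_part w)" "x \<le> x0"
      unfolding A_def NN_def by auto
    have "norm w \<le> 1 + x0" using norm_split[of w] w assms(3) by linarith
    thus "x \<in> (\<lambda>w. norm (vec_part w)) ` {w \<in> lattice M. norm w \<le> 1 + x0}" using w by blast
  qed
  hence finA: "finite A" using finite_lattice_ball[OF assms(1)] finite_subset by blast
  have "x0 \<in> A" using x0 unfolding A_def by auto
  hence mA: "Min A \<in> A" using finA Min_in by blast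
  have low: "\<forall>x\<in>NN M s. Min A \<le> x"
  proof
    fix x assume x: "x \<in> NN M s"
    show "Min A \<le> x"
    proof (cases "x \<le> x0")
      case True thus ?thesis using x finA unfolding A_def by auto
    next
      case False thus ?thesis using \<open>x0 \<in> A\<close> finA by (meson Min_le less_le_not_le nle_le order_trans)
    qed
  qed
  have eq: "Inf (NN M s) = Min A" using mA low unfolding A_def by (intro cInf_eq_minimum) auto
  from mA obtain w where w: "w \<in> lattice M" "0 \<le> first_coord w" "first_coord w < s" "vec_part w \<noteq> 0" "Min A = norm (vec_part w)"
    unfolding A_def NN_def by auto
  show ?thesis using w eq low by auto
qed


lemma geom:
  fixes a b :: "'a::real_inner"
  assumes "a \<noteq> 0" "b \<noteq> 0" "norm a \<le> norm (a - b)" "norm b \<le> norm (a - b)"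
  shows "2 \<le> dist ((2 / norm a) *\<^sub>R a) ((2 / norm b) *\<^sub>R b)"
proof -
  define A where "A = norm a"
  define B where "B = norm b"
  define p where "p = inner a b"
  have A0: "A > 0" and B0: "B > 0" using assms unfolding A_def B_def by auto
  have nd: "(norm (a - b))^2 = A^2 + B^2 - 2 * p"
    unfolding A_def B_def p_def by (simp add: power2_norm_eq_inner inner_diff_left inner_diff_right inner_commute)
  have "A^2 \<le> (norm (a - b))^2" using assms(3) A0 unfolding A_def by (simp add: power_mono)
  hence h1: "2 * p \<le> B^2" using nd by linarith
  have "B^2 \<le> (norm (a - b))^2" using assms(4) B0 unfolding B_def by (simp add: power_mono)
  hence h2: "2 * p \<le> A^2" using nd by linarith
  have pAB: "2 * p \<le> A * B"
  proof (cases "A \<le> B")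
    case True
    hence "A * A \<le> A * B" using A0 by (simp add: mult_left_mono)
    thus ?thesis using h2 by (simp add: power2_eq_square)
  next
    case False
    hence "B * B \<le> A * B" using B0 by (simp add: mult_right_mono)
    thus ?thesis using h1 by (simp add: power2_eq_square)
  qed
  have "(dist ((2 / A) *\<^sub>R a) ((2 / B) *\<^sub>R b))^2
        = (2/A)^2 * A^2 + (2/B)^2 * B^2 - 2 * ((2/A) * (2/B)) * p"
  proof -
    have aa: "inner a a = A^2" and bb: "inner b b = B^2" unfolding A_def B_def by (simp_all add: power2_norm_eq_inner)
    have "(dist ((2 / A) *\<^sub>R a) ((2 / B) *\<^sub>R b))^2 = inner ((2 / A) *\<^sub>R a - (2 / B) *\<^sub>R b) ((2 / A) *\<^sub>R a - (2 / B) *\<^sub>R b)"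
      unfolding dist_norm by (rule power2_norm_eq_inner)
    also have "\<dots> = (2/A) * (2/A) * inner a a + (2/B) * (2/B) * inner b b - 2 * ((2/A) * (2/B)) * inner a b"
      by (simp add: inner_diff_left inner_diff_right inner_commute[of b a] algebra_simps)
    finally show ?thesis using aa bb unfolding p_def by (simp add: power2_eq_square)
  qed
  also have "\<dots> = 8 - 8 * p / (A * B)" using A0 B0 by (simp add: field_simps power2_eq_square)
  also have "\<dots> \<ge> 4"
  proof -
    have "8 * p / (A * B) \<le> 4" using pAB A0 B0 by (simp add: divide_le_eq)
    thus ?thesis by linarith
  qed
  finally have "2^2 \<le> (dist ((2 / A) *\<^sub>R a) ((2 / B) *\<^sub>R b))^2" by simp
  hence "2 \<le> dist ((2 / A) *\<^sub>R a) ((2 / B) *\<^sub>R b)" by (rule power2_le_imp_le) simp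
  thus ?thesis unfolding A_def B_def .
qed

lemma sep_bound:
  fixes k :: "'a::metric_space set"
  assumes "finite k" "T \<subseteq> (\<Union>x\<in>k. ball x 1)" "\<forall>x\<in>T. \<forall>y\<in>T. x \<noteq> y \<longrightarrow> 2 \<le> dist x y"
  shows "finite T \<and> card T \<le> card k"
proof -
  define f where "f s = (SOME x. x \<in> k \<and> s \<in> ball x 1)" for s
  have fs: "f s \<in> k \<and> s \<in> ball (f s) 1" if "s \<in> T" for s
  proof -
    have "\<exists>x. x \<in> k \<and> s \<in> ball x 1" using that assms(2) by blast
    thus ?thesis unfolding f_def by (rule someI_ex)
  qed
  have inj: "inj_on f T"
  proof (rule inj_onI)
    fix s s' assume ss: "s \<in> T" "s' \<in> T" "f s = f s'"
    have "dist s s' \<le> dist s (f s) + dist (f s) s'" by (rule dist_triangle)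
    moreover have "dist s (f s) < 1" using fs[OF ss(1)] by (simp add: dist_commute)
    moreover have "dist (f s) s' < 1" using fs[OF ss(2)] ss(3) by simp
    ultimately have lt: "dist s s' < 2" by linarith
    show "s = s'"
    proof (rule ccontr)
      assume "s \<noteq> s'"
      hence "2 \<le> dist s s'" using assms(3) ss(1,2) by blast
      thus False using lt by linarith
    qed
  qed
  have sub: "f ` T \<subseteq> k" using fs by blast
  show ?thesis using inj_on_finite[OF inj sub assms(1)] card_inj_on_le[OF inj sub assms(1)] by simp
qed

lemma kiss:
  fixes T :: "(real^'n::finite) set"
  assumes "T \<subseteq> sphere 0 2" "\<forall>x\<in>T. \<forall>y\<in>T. x \<noteq> y \<longrightarrow> 2 \<le> dist x y"
  shows "finite T \<and> card T \<le> kissing_number TYPE(real^'n)"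
proof -
  have H: "\<forall>e>0. \<exists>k. finite k \<and> k \<subseteq> sphere (0::real^'n) 2 \<and> sphere (0::real^'n) 2 \<subseteq> (\<Union>x\<in>k. ball x e)"
    by (rule seq_compact_imp_totally_bounded[OF compact_imp_seq_compact[OF compact_sphere]])
  have "\<exists>k. finite k \<and> k \<subseteq> sphere (0::real^'n) 2 \<and> sphere (0::real^'n) 2 \<subseteq> (\<Union>x\<in>k. ball x 1)"
    using H by simp
  then obtain k where k: "finite k" "sphere (0::real^'n) 2 \<subseteq> (\<Union>x\<in>k. ball x 1)" by blast
  have TU: "T \<subseteq> (\<Union>x\<in>k. ball x 1)" using assms(1) k(2) by (rule subset_trans)
  have finT: "finite T" using sep_bound[OF k(1) TU assms(2)] by simp
  define K where "K = {card S | S :: (real^'n) set. finite S \<and> S \<subseteq> sphere 0 2 \<and>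
        (\<forall>x\<in>S. \<forall>y\<in>S. x \<noteq> y \<longrightarrow> ball x 1 \<inter> ball y 1 = {})}"
  have bdd: "bdd_above K"
  proof (rule bdd_aboveI[of _ "card k"])
    fix c assume "c \<in> K"
    then obtain S :: "(real^'n) set" where S: "c = card S" "S \<subseteq> sphere 0 2"
       "\<forall>x\<in>S. \<forall>y\<in>S. x \<noteq> y \<longrightarrow> ball x 1 \<inter> ball y 1 = {}" unfolding K_def by blast
    have pw: "\<forall>x\<in>S. \<forall>y\<in>S. x \<noteq> y \<longrightarrow> 2 \<le> dist x y"
    proof (intro ballI impI)
      fix x y assume xy: "x \<in> S" "y \<in> S" "x \<noteq> y"
      show "2 \<le> dist x y"
      proof (rule ccontr)
        assume "\<not> 2 \<le> dist x y"
        define m where "m = midpoint x y"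
        have "dist x m = dist x y / 2" "dist y m = dist x y / 2"
          unfolding m_def by (simp_all add: dist_midpoint)
        hence "m \<in> ball x 1 \<inter> ball y 1" using \<open>\<not> 2 \<le> dist x y\<close> by auto
        moreover have "ball x 1 \<inter> ball y 1 = {}" using S(3) xy by blast
        ultimately show False by blast
      qed
    qed
    have SU: "S \<subseteq> (\<Union>x\<in>k. ball x 1)" using S(2) k(2) by (rule subset_trans)
    show "c \<le> card k" using sep_bound[OF k(1) SU pw] S(1) by simp
  qed
  have "card T \<in> K"
  proof -
    have "\<forall>x\<in>T. \<forall>y\<in>T. x \<noteq> y \<longrightarrow> ball x 1 \<inter> ball y 1 = {}"
    proof (intro ballI impI)
      fix x y assume xy: "x \<in> T" "y \<in> T" "x \<noteq> y"
      show "ball x 1 \<inter> ball y 1 = {}"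
      proof (rule ccontr)
        assume "ball x 1 \<inter> ball y 1 \<noteq> {}"
        then obtain z where "dist x z < 1" "dist y z < 1" by auto
        hence "dist x y < 2" using dist_triangle[of x y z] by (simp add: dist_commute)
        moreover have "2 \<le> dist x y" using assms(2) xy by blast
        ultimately show False by linarith
      qed
    qed
    thus ?thesis unfolding K_def using finT assms(1) by (intro CollectI exI[of _ T]) simp
  qed
  hence "card T \<le> Sup K" using bdd by (rule cSup_upper)
  thus ?thesis using finT unfolding kissing_number_def K_def by simp
qed

lemma NN_mono: "s1 \<le> s2 \<Longrightarrow> NN M s1 \<subseteq> NN M s2"
  unfolding NN_def by fastforce

lemma NN_bdd: "bdd_below (NN M s)"
  unfolding NN_def by (rule bdd_belowI[of _ 0]) auto

theorem theorem6p1: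
  fixes M :: "real^('n::finite option)^('n option)"
  assumes "CARD('n) \<ge> 3"
    and "det M = 1"
  shows "finite (value_set (sphere (0::real^'n) 1) M) \<and>
         card (value_set (sphere (0::real^'n) 1) M) \<le> kissing_number TYPE(real^'n) + 1"
proof -
  have detnz: "det M \<noteq> 0" using assms(2) by simp
  define G where "G s = Inf (NN M s)" for s
  have VS: "value_set (sphere (0::real^'n) 1) M = G ` {1/2..<1}"
  proof (intro set_eqI iffI)
    fix x assume "x \<in> value_set (sphere (0::real^'n) 1) M"
    then obtain t where t: "0 < t" "t < 1" "x = F_fun (sphere (0::real^'n) 1) M t" unfolding value_set_def by blast
    hence "x = G (max t (1 - t))" unfolding F_fun_def G_def using F_eq[OF t(1,2), of M] by simp
    moreover have "max t (1 - t) \<in> {1/2..<1}" using t by (auto simp: max_def)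
    ultimately show "x \<in> G ` {1/2..<1}" by blast
  next
    fix x assume "x \<in> G ` {1/2..<1}"
    then obtain s where s: "1/2 \<le> s" "s < 1" "x = G s" by auto
    have "max s (1 - s) = s" using s by auto
    hence "x = F_fun (sphere (0::real^'n) 1) M s" unfolding F_fun_def using F_eq[of s M] s by (simp add: G_def)
    moreover have "0 < s \<and> s < 1" using s by simp
    ultimately show "x \<in> value_set (sphere (0::real^'n) 1) M" unfolding value_set_def by blast
  qed
  define g0 where "g0 = G (1/2)"
  define V' where "V' = G ` {1/2..<1} - {g0}"
  have key: "\<exists>w s. w \<in> lattice M \<and> 1/2 \<le> s \<and> s < 1 \<and> 1/2 \<le> first_coord w \<and> first_coord w < s
        \<and> vec_part w \<noteq> 0 \<and> norm (vec_part w) = r \<and> (\<forall>x\<in>NN M s. r \<le> x)" if r: "r \<in> V'" for r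
  proof -
    obtain s where s: "1/2 \<le> s" "s < 1" "r = G s" "r \<noteq> g0" using r unfolding V'_def by auto
    have ne: "NN M s \<noteq> {}"
    proof
      assume "NN M s = {}"
      hence "NN M (1/2) = {}" using NN_mono[OF s(1), of M] by blast
      thus False using s \<open>NN M s = {}\<close> unfolding g0_def G_def by simp
    qed
    obtain w where w: "w \<in> lattice M" "0 \<le> first_coord w" "first_coord w < s" "vec_part w \<noteq> 0"
      "norm (vec_part w) = G s" "\<forall>x\<in>NN M s. G s \<le> x"
      using attain[OF detnz ne] s unfolding G_def by auto
    have "1/2 \<le> first_coord w"
    proof (rule ccontr)
      assume "\<not> 1/2 \<le> first_coord w"
      hence mem: "norm (vec_part w) \<in> NN M (1/2)" unfolding NN_def
        using w by (intro CollectI exI[of _ w]) auto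
      have "Inf (NN M (1/2)) \<le> norm (vec_part w)" by (rule cInf_lower[OF mem NN_bdd])
      hence "g0 \<le> r" using w(5) s(3) unfolding g0_def G_def by simp
      moreover have ne2: "NN M (1/2) \<noteq> {}" using mem by blast
      have "Inf (NN M s) \<le> Inf (NN M (1/2))" by (rule cInf_superset_mono[OF ne2 NN_bdd NN_mono[OF s(1)]])
      hence "r \<le> g0" using s(3) unfolding g0_def G_def by simp
      ultimately show False using s(4) by simp
    qed
    thus ?thesis using w s by (intro exI[of _ w] exI[of _ s]) auto
  qed
  define P where "P r w s \<longleftrightarrow> w \<in> lattice M \<and> 1/2 \<le> s \<and> s < 1 \<and> 1/2 \<le> first_coord w
        \<and> first_coord w < s \<and> vec_part w \<noteq> 0 \<and> norm (vec_part w) = r \<and> (\<forall>x\<in>NN M s. r \<le> x)" for r w s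
  define W where "W r = (SOME w. \<exists>s. P r w s)" for r
  define S where "S r = (SOME s. P r (W r) s)" for r
  have WSP: "P r (W r) (S r)" if "r \<in> V'" for r
  proof -
    have "\<exists>w s. P r w s" using key[OF that] unfolding P_def .
    hence "\<exists>s. P r (W r) s" unfolding W_def by (rule someI_ex)
    thus ?thesis unfolding S_def by (rule someI_ex)
  qed
  have WS: "W r \<in> lattice M \<and> 1/2 \<le> S r \<and> S r < 1 \<and> 1/2 \<le> first_coord (W r)
        \<and> first_coord (W r) < S r \<and> vec_part (W r) \<noteq> 0 \<and> norm (vec_part (W r)) = r \<and> (\<forall>x\<in>NN M (S r). r \<le> x)"
    if "r \<in> V'" for r
    using WSP[OF that] unfolding P_def .
  have sep: "r \<le> norm (vec_part (W r) - vec_part (W r'))" if rr: "r \<in> V'" "r' \<in> V'" "r \<noteq> r'" for r r'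
  proof -
    have ne: "vec_part (W r') - vec_part (W r) \<noteq> 0" using WS[OF rr(1)] WS[OF rr(2)] rr(3) by auto
    show ?thesis
    proof (cases "first_coord (W r) \<le> first_coord (W r')")
      case True
      have "norm (vec_part (W r' - W r)) \<in> NN M (S r)" unfolding NN_def
        using WS[OF rr(1)] WS[OF rr(2)] True ne lattice_diff
        by (intro CollectI exI[of _ "W r' - W r"]) (auto simp: vec_part_diff first_coord_diff)
      thus ?thesis using WS[OF rr(1)] by (auto simp: vec_part_diff norm_minus_commute)
    next
      case False
      have "norm (vec_part (W r - W r')) \<in> NN M (S r)" unfolding NN_def
        using WS[OF rr(1)] WS[OF rr(2)] False ne lattice_diff
        by (intro CollectI exI[of _ "W r - W r'"]) (auto simp: vec_part_diff first_coord_diff)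
      thus ?thesis using WS[OF rr(1)] by (auto simp: vec_part_diff)
    qed
  qed
  define X where "X r = (2 / r) *\<^sub>R vec_part (W r)" for r
  have Xd: "2 \<le> dist (X r) (X r')" if rr: "r \<in> V'" "r' \<in> V'" "r \<noteq> r'" for r r'
  proof -
    have "2 \<le> dist ((2 / norm (vec_part (W r))) *\<^sub>R vec_part (W r)) ((2 / norm (vec_part (W r'))) *\<^sub>R vec_part (W r'))"
      using WS[OF rr(1)] WS[OF rr(2)] sep[OF rr] sep[OF rr(2,1) rr(3)[symmetric]]
      by (intro geom) (auto simp: norm_minus_commute)
    thus ?thesis using WS[OF rr(1)] WS[OF rr(2)] unfolding X_def by simp
  qed
  have Xs: "X ` V' \<subseteq> sphere 0 2"
  proof
    fix y assume "y \<in> X ` V'"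
    then obtain r where r: "r \<in> V'" "y = X r" by blast
    have "vec_part (W r) \<noteq> 0" "norm (vec_part (W r)) = r" using WS[OF r(1)] by auto
    hence "r > 0" by (metis zero_less_norm_iff)
    thus "y \<in> sphere 0 2" using WS[OF r(1)] r unfolding X_def by simp
  qed
  have inj: "inj_on X V'"
  proof (rule inj_onI)
    fix r r' assume "r \<in> V'" "r' \<in> V'" "X r = X r'"
    show "r = r'"
    proof (rule ccontr)
      assume "r \<noteq> r'"
      hence "2 \<le> dist (X r) (X r')" using Xd \<open>r \<in> V'\<close> \<open>r' \<in> V'\<close> by blast
      thus False using \<open>X r = X r'\<close> by simp
    qed
  qed
  have pw: "\<forall>x\<in>X ` V'. \<forall>y\<in>X ` V'. x \<noteq> y \<longrightarrow> 2 \<le> dist x y"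
  proof (intro ballI impI)
    fix x y assume "x \<in> X ` V'" "y \<in> X ` V'" "x \<noteq> y"
    then obtain r r' where "r \<in> V'" "r' \<in> V'" "x = X r" "y = X r'" by blast
    moreover have "r \<noteq> r'" using \<open>x \<noteq> y\<close> calculation by blast
    ultimately show "2 \<le> dist x y" using Xd by simp
  qed
  have K: "finite (X ` V') \<and> card (X ` V') \<le> kissing_number TYPE(real^'n)" by (rule kiss[OF Xs pw])
  have finV': "finite V'" using K inj finite_imageD by blast
  have cV': "card V' \<le> kissing_number TYPE(real^'n)" using K card_image[OF inj] by simp
  have sub: "G ` {1/2..<1} \<subseteq> insert g0 V'" unfolding V'_def by blast
  have fin: "finite (G ` {1/2..<1})" using finite_subset[OF sub] finV' by blast
  have "card (G ` {1/2..<1}) \<le> card (insert g0 V')" using card_mono[OF _ sub] finV' by blast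
  also have "\<dots> \<le> card V' + 1" using finV' by (simp add: card_insert_if)
  finally have c: "card (G ` {1/2..<1}) \<le> card V' + 1" .
  show ?thesis unfolding VS by (intro conjI fin) (use c cV' in linarith)
qed

end
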